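(* Identify $\mathrm{SO}(2)$ with the unit circle $\mathbb{C}_1=\{z\in\mathbb{C}:|z|=1\}$. Let $G([n],E)$ be a graph with $E=E_g\cup E_b$, let $\boldsymbol{z}^\star=(z_1^\star,\dots,z_n^\star)\in\mathbb{C}_1^n$ be unknown, and suppose we observe $z_{jk}\in\mathbb{C}_1$ for $jk\in E$ with $z_{jk}=z_j^\star\overline{z_k^\star}$ for $jk\in E_g$ and $z_{jk}$ arbitrary (adversarial) for $jk\in E_b$. Let $E^j=\{k:jk\in E\}$, $E_b^j=\{k:jk\in E_b\}$, $n_j=\#(E^j)$ and $\alpha_0=\max_j\#(E_b^j)/n_j$. Assume: $\alpha_0<1/4$; there is $c\in\mathbb{C}_1$ with $d_\angle(c,\overline{z_j^\star}z_j(0))<\pi/2$ for all $j$; and for every nonempty $J\subset[n]$ with $\#(J)\le n/2$ there is $j\in J$ with $\#\big(E^j\cap([n]\setminus J)\big)>\#\big(E^j\cap J\big)$. Let $\eta\in(0,1)$ and let $(\boldsymbol{z}(t))_{t\in\mathbb{N}}$ be generated by $\eta$-damped trimmed averaging synchronization: at time $t$, with $j=t\bmod n$, $$z_j(t+1)=\mathrm{Exp}_{z_j(t)}\Big[\eta\cdot\mathrm{ave}\Big(\mathcal{T}_{0.25}\big\{\mathrm{Log}_{z_j(t)}(z_{jk}z_k(t)):k\in E^j\big\}\Big)\Big],$$ and $z_k(t+1)=z_k(t)$ for $k\ne j$. Then $\delta(\boldsymbol{z}(t))\to 0$, i.e. the algorithm exactly recovers $\boldsymbol{z}^\star$ up to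 a global rotation. Further, if $G$ is the complete graph, $\boldsymbol{z}(t)$ converges linearly to $\boldsymbol{z}^\star$ (up to global rotation), i.e. $\delta(\boldsymbol{z}(t))\to 0$ at a geometric rate.
   Context: $\arg(e^{i\theta})=\theta\in(-\pi,\pi]$; $d_\angle(z_1,z_2)=|\arg(z_1\overline{z_2})|$. $\mathrm{Exp}_z(\theta)=e^{i\theta}z$ and $\mathrm{Log}_z(y)=\arg(y\overline{z})$ (tangent spaces identified with $\mathbb{R}$). For a finite multiset $\mathcal{X}\subset\mathbb{R}$, $\mathcal{X}_p$ is its empirical $p$-quantile, $\mathcal{T}_{0.25}\mathcal{X}=\{x\in\mathcal{X}:\mathcal{X}_{0.25}\le x\le\mathcal{X}_{0.75}\}$, and $\mathrm{ave}(\mathcal{X})$ is the arithmetic mean. $\delta(\boldsymbol{z})=\max_{jk\in E}d_\angle(\overline{z_j^\star}z_j,\overline{z_k^\star}z_k)$. *)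

theory Defs
  imports "HOL-Analysis.Analysis" "HOL-Library.Multiset"
begin

definition d_ang :: "complex \<Rightarrow> complex \<Rightarrow> real" where
  "d_ang z1 z2 = \<bar>Arg (z1 * cnj z2)\<bar>"

text \<open>Exponential and logarithm maps on the circle (tangent spaces identified with R).\<close>
definition Exp_c :: "complex \<Rightarrow> real \<Rightarrow> complex" where
  "Exp_c z \<theta> = cis \<theta> * z"

definition Log_c :: "complex \<Rightarrow> complex \<Rightarrow> real" where
  "Log_c z y = Arg (y * cnj z)"

text \<open>Empirical p-quantile of a finite multiset: the ceil(p m)-th smallest element
  (inf of x with empirical cdf at x at least p), first element for p = 0.\<close>
definition emp_quantile :: "real \<Rightarrow> real multiset \<Rightarrow> real" where
  "emp_quantile p X = sorted_list_of_multiset X ! (nat \<lceil>p * real (size X)\<rceil> - 1)"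

definition trim25 :: "real multiset \<Rightarrow> real multiset" where
  "trim25 X = filter_mset (\<lambda>x. emp_quantile 0.25 X \<le> x \<and> x \<le> emp_quantile 0.75 X) X"

definition ave :: "real multiset \<Rightarrow> real" where
  "ave X = sum_mset X / real (size X)"

definition nbhd :: "(nat \<times> nat) set \<Rightarrow> nat \<Rightarrow> nat set" where
  "nbhd E j = {k. (j, k) \<in> E}"

definition delta :: "(nat \<times> nat) set \<Rightarrow> (nat \<Rightarrow> complex) \<Rightarrow> (nat \<Rightarrow> complex) \<Rightarrow> real" where
  "delta E zs z = Max (insert 0 {d_ang (cnj (zs j) * z j) (cnj (zs k) * z k) | j k. (j, k) \<in> E})"

definition tas_update ::
  "real \<Rightarrow> (nat \<times> nat) set \<Rightarrow> (nat \<Rightarrow> nat \<Rightarrow> complex) \<Rightarrow> (nat \<Rightarrow> complex) \<Rightarrow> nat \<Rightarrow> complex" where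
  "tas_update \<eta> E zobs z j =
     Exp_c (z j) (\<eta> * ave (trim25 (image_mset (\<lambda>k. Log_c (z j) (zobs j k * z k)) (mset_set (nbhd E j)))))"

end

theory Submission
  imports Defs
begin

lemma cnt_lt:
  fixes xs :: "real list"
  assumes "sorted xs" "i < length xs" "xs ! i \<le> a"
  shows "Suc i \<le> length (filter (\<lambda>x. x \<le> a) xs)"
proof -
  have all: "\<forall>x\<in>set (take (Suc i) xs). x \<le> a"
  proof
    fix x assume "x \<in> set (take (Suc i) xs)"
    then obtain l where l: "l < length (take (Suc i) xs)" "x = take (Suc i) xs ! l"
      by (metis in_set_conv_nth)
    hence "l \<le> i" "x = xs ! l" by auto
    hence "x \<le> xs ! i" using assms(1,2) by (simp add: sorted_nth_mono)
    thus "x \<le> a" using assms(3) by simp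
  qed
  have "length (filter (\<lambda>x. x \<le> a) (take (Suc i) xs)) = Suc i"
    using all assms(2) by (simp add: min_def)
  moreover have "length (filter (\<lambda>x. x \<le> a) xs) = length (filter (\<lambda>x. x \<le> a) (take (Suc i) xs)) + length (filter (\<lambda>x. x \<le> a) (drop (Suc i) xs))"
    by (metis append_take_drop_id filter_append length_append)
  ultimately show ?thesis by linarith
qed

lemma cnt_gt:
  fixes xs :: "real list"
  assumes "sorted xs" "i < length xs" "a \<le> xs ! i"
  shows "length xs - i \<le> length (filter (\<lambda>x. a \<le> x) xs)"
proof -
  have all: "\<forall>x\<in>set (drop i xs). a \<le> x"
  proof
    fix x assume "x \<in> set (drop i xs)"
    then obtain l where l: "l < length (drop i xs)" "x = drop i xs ! l"
      by (metis in_set_conv_nth)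
    hence "i \<le> i + l" "x = xs ! (i + l)" "i + l < length xs" by auto
    hence "xs ! i \<le> x" using assms(1,2) by (simp add: sorted_nth_mono)
    thus "a \<le> x" using assms(3) by simp
  qed
  have "length (filter (\<lambda>x. a \<le> x) (drop i xs)) = length xs - i"
    using all by simp
  moreover have "length (filter (\<lambda>x. a \<le> x) xs) = length (filter (\<lambda>x. a \<le> x) (take i xs)) + length (filter (\<lambda>x. a \<le> x) (drop i xs))"
    by (metis append_take_drop_id filter_append length_append)
  ultimately show ?thesis by linarith
qed

lemma size_filter_sorted:
  "size (filter_mset P X) = length (filter P (sorted_list_of_multiset X))"
  by (metis mset_filter mset_sorted_list_of_multiset size_mset)

lemma length_sorted_lom: "length (sorted_list_of_multiset X) = size X"
  by (metis mset_sorted_list_of_multiset size_mset)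

lemma filter_out_G:
  assumes "G \<subseteq># X" "\<forall>x\<in>#G. \<not> P x"
  shows "size (filter_mset P X) \<le> size X - size G"
proof -
  have "X = G + (X - G)" using assms(1) by (simp add: subset_mset.add_diff_inverse)
  hence "filter_mset P X = filter_mset P G + filter_mset P (X - G)"
    by (metis filter_union_mset)
  moreover have "filter_mset P G = {#}" using assms(2) by simp
  ultimately have "size (filter_mset P X) = size (filter_mset P (X - G))" by (metis add_0)
  also have "\<dots> \<le> size (X - G)" by (rule size_filter_mset_lesseq)
  also have "\<dots> = size X - size G" using assms(1) by (simp add: size_Diff_submset)
  finally show ?thesis .
qed

lemma sum_mset_le:
  fixes T :: "real multiset"
  shows "(\<forall>x\<in>#T. x \<le> h) \<Longrightarrow> sum_mset T \<le> real (size T) * h"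
  by (induction T) (auto simp: algebra_simps)

lemma sum_mset_ge:
  fixes T :: "real multiset"
  shows "(\<forall>x\<in>#T. h \<le> x) \<Longrightarrow> real (size T) * h \<le> sum_mset T"
  by (induction T) (auto simp: algebra_simps)

lemma q_facts:
  fixes m :: nat
  assumes "1 \<le> m"
  defines "q1 \<equiv> nat \<lceil>0.25 * real m\<rceil> - 1" and "q3 \<equiv> nat \<lceil>0.75 * real m\<rceil> - 1"
  shows "q1 \<le> q3" "q3 < m" "real (Suc q1) \<ge> real m / 4"
    "\<And>c. real m < 4 * real c \<Longrightarrow> Suc q1 \<le> c"
    "real (m - q3) > real m / 4"
    "real (m - Suc q3) \<le> real m / 4"
proof -
  have e1: "0.25 * real m = real m / 4" "0.75 * real m = 3 * real m / 4" by simp_all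
  define a1 where "a1 = \<lceil>real m / 4\<rceil>"
  define a3 where "a3 = \<lceil>3 * real m / 4\<rceil>"
  have r1: "real m \<le> 4 * real_of_int a1" "4 * real_of_int a1 < real m + 4"
    using ceiling_correct[of "real m / 4"] unfolding a1_def by linarith+
  have r3: "3 * real m \<le> 4 * real_of_int a3" "4 * real_of_int a3 < 3 * real m + 4"
    using ceiling_correct[of "3 * real m / 4"] unfolding a3_def by linarith+
  have i1: "int m \<le> 4 * a1" "4 * a1 < int m + 4" using r1 by linarith+
  have i3: "3 * int m \<le> 4 * a3" "4 * a3 < 3 * int m + 4" using r3 by linarith+
  have q1e: "int q1 = a1 - 1" unfolding q1_def e1 a1_def[symmetric] using i1 assms by linarith
  have q3e: "int q3 = a3 - 1" unfolding q3_def e1 a3_def[symmetric] using i3 assms by linarith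
  show "q1 \<le> q3" using q1e q3e i1 i3 by linarith
  show "q3 < m" using q3e i3 assms by linarith
  have n1: "m \<le> 4 * q1 + 4" using q1e i1 by linarith
  have "real m \<le> real (4 * q1 + 4)" using n1 by (rule of_nat_mono)
  thus "real (Suc q1) \<ge> real m / 4" by simp
  show "\<And>c. real m < 4 * real c \<Longrightarrow> Suc q1 \<le> c"
  proof -
    fix c assume "real m < 4 * real c"
    hence "real m < real (4 * c)" by simp
    hence "m < 4 * c" by (simp only: of_nat_less_iff)
    hence "int m < 4 * int c" by linarith
    hence "int q1 + 1 \<le> int c" using q1e i1 by linarith
    thus "Suc q1 \<le> c" by linarith
  qed
  have "m < 4 * (m - q3)" using q3e i3 assms by linarith
  hence "real m < real (4 * (m - q3))" by (simp only: of_nat_less_iff)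
  thus "real (m - q3) > real m / 4" by simp
  have "q3 < m" using q3e i3 assms by linarith
  hence "int (m - Suc q3) = int m - int q3 - 1" by linarith
  hence "4 * (m - Suc q3) \<le> m" using q3e i3 assms by linarith
  hence "real (4 * (m - Suc q3)) \<le> real m" by (simp only: of_nat_le_iff)
  thus "real (m - Suc q3) \<le> real m / 4" by simp
qed

lemma filter_disj_size:
  assumes "\<And>x. P x \<Longrightarrow> \<not> Q x"
  shows "size (filter_mset P X) + size (filter_mset Q X) \<le> size X"
proof -
  have "filter_mset Q X \<subseteq># filter_mset (\<lambda>x. \<not> P x) X"
    using assms by (intro filter_mset_mono_strong) auto
  hence "size (filter_mset Q X) \<le> size (filter_mset (\<lambda>x. \<not> P x) X)" by (rule size_mset_mono)
  moreover have "size (filter_mset P X) + size (filter_mset (\<lambda>x. \<not> P x) X) = size X"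
    by (metis multiset_partition size_union)
  ultimately show ?thesis by linarith
qed

locale trimctx =
  fixes X G :: "real multiset"
  assumes GX: "G \<subseteq># X" and bad: "4 * (size X - size G) < size X"
begin

definition "xs = sorted_list_of_multiset X"
definition "m = size X"
definition "q1 = nat \<lceil>0.25 * real m\<rceil> - 1"
definition "q3 = nat \<lceil>0.75 * real m\<rceil> - 1"

lemma m1: "1 \<le> m" using bad unfolding m_def by linarith
lemma len: "length xs = m" unfolding xs_def m_def by (rule length_sorted_lom)
lemma srt: "sorted xs" unfolding xs_def by simp
lemma qf: "q1 \<le> q3" "q3 < m" "real (Suc q1) \<ge> real m / 4"
    "\<And>c. real m < 4 * real c \<Longrightarrow> Suc q1 \<le> c"
    "real (m - q3) > real m / 4"
    "real (m - Suc q3) \<le> real m / 4"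
  using q_facts[OF m1] unfolding q1_def q3_def by auto

lemma badr: "real (m - size G) < real m / 4"
proof -
  have "4 * (m - size G) < m" using bad unfolding m_def .
  hence "real (4 * (m - size G)) < real m" by (simp only: of_nat_less_iff)
  thus ?thesis by simp
qed

lemma trim_eq: "trim25 X = filter_mset (\<lambda>x. xs ! q1 \<le> x \<and> x \<le> xs ! q3) X"
  unfolding trim25_def emp_quantile_def xs_def q1_def q3_def m_def by simp

lemma q1q3: "xs ! q1 \<le> xs ! q3" using srt qf len by (simp add: sorted_nth_mono)

lemma inX: "i < m \<Longrightarrow> xs ! i \<in># X"
  using len by (metis nth_mem set_sorted_list_of_multiset xs_def)

lemma Q1_in: "xs ! q1 \<in># trim25 X"
  using trim_eq q1q3 inX qf by auto
lemma Q3_in: "xs ! q3 \<in># trim25 X"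
  using trim_eq q1q3 inX qf by auto
lemma ne: "trim25 X \<noteq> {#}" using Q1_in by auto
lemma sz: "size (trim25 X) \<le> m" unfolding m_def trim25_def by (rule size_filter_mset_lesseq)
lemma sz1: "1 \<le> size (trim25 X)" using ne by (simp add: Suc_le_eq nonempty_has_size)

lemma cntX: "size (filter_mset P X) = length (filter P xs)"
  unfolding xs_def by (rule size_filter_sorted)

lemma Q3_le: assumes "\<forall>x\<in>#G. x \<le> hi" shows "xs ! q3 \<le> hi"
proof (rule ccontr)
  assume "\<not> xs ! q3 \<le> hi"
  hence "\<forall>x\<in>#G. \<not> (xs ! q3 \<le> x)" using assms by force
  hence "size (filter_mset (\<lambda>x. xs ! q3 \<le> x) X) \<le> m - size G"
    unfolding m_def by (rule filter_out_G[OF GX])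
  moreover have "m - q3 \<le> size (filter_mset (\<lambda>x. xs ! q3 \<le> x) X)"
    unfolding cntX using cnt_gt[OF srt, of q3 "xs ! q3"] len qf by simp
  ultimately have "real (m - q3) \<le> real (m - size G)" by simp
  thus False using badr qf by linarith
qed

lemma Q1_ge: assumes "\<forall>x\<in>#G. lo \<le> x" shows "lo \<le> xs ! q1"
proof (rule ccontr)
  assume "\<not> lo \<le> xs ! q1"
  hence "\<forall>x\<in>#G. \<not> (x \<le> xs ! q1)" using assms by force
  hence "size (filter_mset (\<lambda>x. x \<le> xs ! q1) X) \<le> m - size G"
    unfolding m_def by (rule filter_out_G[OF GX])
  moreover have "Suc q1 \<le> size (filter_mset (\<lambda>x. x \<le> xs ! q1) X)"
    unfolding cntX using cnt_lt[OF srt, of q1 "xs ! q1"] len qf by simp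
  ultimately have "real (Suc q1) \<le> real (m - size G)" by simp
  thus False using badr qf by linarith
qed

lemma Q1_le: assumes "real m < 4 * real (size (filter_mset (\<lambda>x. x \<le> a) G))"
  shows "xs ! q1 \<le> a"
proof (rule ccontr)
  assume A: "\<not> xs ! q1 \<le> a"
  have "m - q1 \<le> size (filter_mset (\<lambda>x. xs ! q1 \<le> x) X)"
    unfolding cntX using cnt_gt[OF srt, of q1 "xs ! q1"] len qf by simp
  moreover have "size (filter_mset (\<lambda>x. x \<le> a) X) + size (filter_mset (\<lambda>x. xs ! q1 \<le> x) X) \<le> m"
    unfolding m_def by (rule filter_disj_size) (use A in auto)
  moreover have "size (filter_mset (\<lambda>x. x \<le> a) G) \<le> size (filter_mset (\<lambda>x. x \<le> a) X)"
    by (intro size_mset_mono multiset_filter_mono GX)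
  ultimately have "size (filter_mset (\<lambda>x. x \<le> a) G) \<le> q1" using qf by linarith
  thus False using qf(4)[OF assms] by linarith
qed

lemma Q3_ge: assumes "real m < 4 * real (size (filter_mset (\<lambda>x. a \<le> x) G))"
  shows "a \<le> xs ! q3"
proof (rule ccontr)
  assume A: "\<not> a \<le> xs ! q3"
  have "Suc q3 \<le> size (filter_mset (\<lambda>x. x \<le> xs ! q3) X)"
    unfolding cntX using cnt_lt[OF srt, of q3 "xs ! q3"] len qf by simp
  moreover have "size (filter_mset (\<lambda>x. x \<le> xs ! q3) X) + size (filter_mset (\<lambda>x. a \<le> x) X) \<le> m"
    unfolding m_def by (rule filter_disj_size) (use A in auto)
  moreover have "size (filter_mset (\<lambda>x. a \<le> x) G) \<le> size (filter_mset (\<lambda>x. a \<le> x) X)"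
    by (intro size_mset_mono multiset_filter_mono GX)
  ultimately have "size (filter_mset (\<lambda>x. a \<le> x) G) \<le> m - Suc q3" by linarith
  hence "real (size (filter_mset (\<lambda>x. a \<le> x) G)) \<le> real (m - Suc q3)" by simp
  thus False using qf(6) assms by linarith
qed

lemma T_le: assumes "\<forall>x\<in>#G. x \<le> hi" shows "\<forall>x\<in>#trim25 X. x \<le> hi"
  using Q3_le[OF assms] trim_eq by auto
lemma T_ge: assumes "\<forall>x\<in>#G. lo \<le> x" shows "\<forall>x\<in>#trim25 X. lo \<le> x"
  using Q1_ge[OF assms] trim_eq by auto

lemma ave_le: assumes "\<forall>x\<in>#G. x \<le> hi" shows "ave (trim25 X) \<le> hi"
proof -
  have "sum_mset (trim25 X) \<le> real (size (trim25 X)) * hi" using sum_mset_le T_le[OF assms] by blast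
  thus ?thesis unfolding ave_def using sz1 by (simp add: divide_le_eq mult.commute)
qed

lemma ave_ge: assumes "\<forall>x\<in>#G. lo \<le> x" shows "lo \<le> ave (trim25 X)"
proof -
  have "real (size (trim25 X)) * lo \<le> sum_mset (trim25 X)" using sum_mset_ge T_ge[OF assms] by blast
  thus ?thesis unfolding ave_def using sz1 by (simp add: le_divide_eq mult.commute)
qed

lemma ave_le2: assumes "\<forall>x\<in>#G. x \<le> hi" "a \<le> hi"
  "real m < 4 * real (size (filter_mset (\<lambda>x. x \<le> a) G))"
  shows "ave (trim25 X) \<le> hi - (hi - a) / real m"
proof -
  define T where "T = trim25 X"
  define s where "s = size T"
  have x0: "xs ! q1 \<in># T" "xs ! q1 \<le> a" using Q1_in Q1_le[OF assms(3)] T_def by auto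
  have T: "T = add_mset (xs ! q1) (T - {#xs ! q1#})" using x0 by simp
  have "\<forall>x\<in>#T - {#xs ! q1#}. x \<le> hi" using T_le[OF assms(1)] T_def by (meson in_diffD)
  hence "sum_mset (T - {#xs ! q1#}) \<le> real (size (T - {#xs ! q1#})) * hi" by (rule sum_mset_le)
  moreover have "size (T - {#xs ! q1#}) = s - 1" using x0 s_def by (simp add: size_Diff_submset)
  ultimately have "sum_mset (T - {#xs ! q1#}) \<le> real (s - 1) * hi" by simp
  moreover have "sum_mset T = xs ! q1 + sum_mset (T - {#xs ! q1#})" by (subst T) simp
  ultimately have st: "sum_mset T \<le> a + real (s - 1) * hi" using x0 by linarith
  have s1: "1 \<le> s" "s \<le> m" using sz1 sz unfolding s_def T_def by auto
  hence "real (s - 1) = real s - 1" by simp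
  with st have "sum_mset T \<le> real s * hi - (hi - a)" by (simp add: algebra_simps)
  hence "sum_mset T / real s \<le> (real s * hi - (hi - a)) / real s" by (intro divide_right_mono) auto
  also have "\<dots> = hi - (hi - a) / real s" using s1 by (simp add: field_simps)
  finally have "sum_mset T / real s \<le> hi - (hi - a) / real s" .
  moreover have "(hi - a) / real m \<le> (hi - a) / real s" using s1 assms(2) by (simp add: frac_le)
  ultimately show ?thesis unfolding ave_def T_def[symmetric] s_def[symmetric] by linarith
qed

lemma ave_ge2: assumes "\<forall>x\<in>#G. lo \<le> x" "lo \<le> a"
  "real m < 4 * real (size (filter_mset (\<lambda>x. a \<le> x) G))"
  shows "lo + (a - lo) / real m \<le> ave (trim25 X)"
proof -
  define T where "T = trim25 X"
  define s where "s = size T"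
  have x0: "xs ! q3 \<in># T" "a \<le> xs ! q3" using Q3_in Q3_ge[OF assms(3)] T_def by auto
  have T: "T = add_mset (xs ! q3) (T - {#xs ! q3#})" using x0 by simp
  have "\<forall>x\<in>#T - {#xs ! q3#}. lo \<le> x" using T_ge[OF assms(1)] T_def by (meson in_diffD)
  hence "real (size (T - {#xs ! q3#})) * lo \<le> sum_mset (T - {#xs ! q3#})" by (rule sum_mset_ge)
  moreover have "size (T - {#xs ! q3#}) = s - 1" using x0 s_def by (simp add: size_Diff_submset)
  ultimately have "real (s - 1) * lo \<le> sum_mset (T - {#xs ! q3#})" by simp
  moreover have "sum_mset T = xs ! q3 + sum_mset (T - {#xs ! q3#})" by (subst T) simp
  ultimately have st: "a + real (s - 1) * lo \<le> sum_mset T" using x0 by linarith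
  have s1: "1 \<le> s" "s \<le> m" using sz1 sz unfolding s_def T_def by auto
  hence "real (s - 1) = real s - 1" by simp
  with st have "real s * lo + (a - lo) \<le> sum_mset T" by (simp add: algebra_simps)
  hence "(real s * lo + (a - lo)) / real s \<le> sum_mset T / real s" by (intro divide_right_mono) auto
  moreover have "(real s * lo + (a - lo)) / real s = lo + (a - lo) / real s" using s1 by (simp add: field_simps)
  ultimately have "lo + (a - lo) / real s \<le> sum_mset T / real s" by simp
  moreover have "(a - lo) / real m \<le> (a - lo) / real s" using s1 assms(2) by (simp add: frac_le)
  ultimately show ?thesis unfolding ave_def T_def[symmetric] s_def[symmetric] by linarith
qed

end

lemma exists_u:
  fixes n s j :: nat
  assumes "1 \<le> n" "j < n"
  shows "\<exists>u. s \<le> u \<and> u < s + n \<and> u mod n = j"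
proof -
  define q r where "q = s div n" and "r = s mod n"
  have s: "s = n * q + r" unfolding q_def r_def by simp
  have r: "r < n" unfolding r_def using assms by simp
  show ?thesis
  proof (cases "r \<le> j")
    case True
    have "(n * q + j) mod n = j" using assms by simp
    thus ?thesis using True s assms by (intro exI[of _ "n * q + j"]) auto
  next
    case False
    have "(n * (Suc q) + j) mod n = j" using assms by (metis mod_less mod_mult_self3 mult.commute)
    thus ?thesis using False s assms r by (intro exI[of _ "n * (Suc q) + j"]) auto
  qed
qed

locale cons =
  fixes n :: nat and \<eta> :: real and N :: "nat \<Rightarrow> nat set" and \<theta> :: "nat \<Rightarrow> nat \<Rightarrow> real"
  assumes n1: "1 \<le> n" and eta: "0 < \<eta>" "\<eta> < 1"
    and Nsub: "\<And>j. N j \<subseteq> {..<n}"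
    and expd: "\<And>J. J \<subseteq> {..<n} \<Longrightarrow> J \<noteq> {} \<Longrightarrow> real (card J) \<le> real n / 2 \<Longrightarrow>
               (\<exists>j\<in>J. card (N j \<inter> ({..<n} - J)) > card (N j \<inter> J))"
    and stepA: "\<And>t M. (\<forall>k<n. \<theta> t k \<le> M) \<Longrightarrow> \<forall>j<n. \<theta> (Suc t) j \<le> (1 - \<eta>) * \<theta> t j + \<eta> * M"
    and stepB: "\<And>t M d. (\<forall>k<n. \<theta> t k \<le> M) \<Longrightarrow> 0 \<le> d \<Longrightarrow>
               card (N (t mod n)) < 2 * card {k\<in>N (t mod n). \<theta> t k \<le> M - d} \<Longrightarrow>
               \<theta> (Suc t) (t mod n) \<le> M - \<eta> * d / real n"
begin

definition "\<rho> = \<eta> * (1 - \<eta>) ^ (2 * n) / real n"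

lemma rho: "0 < \<rho>" "\<rho> \<le> (1 - \<eta>) ^ n" "\<rho> \<le> 1"
proof -
  have p: "0 < (1 - \<eta>) ^ n" "(1 - \<eta>) ^ n \<le> 1" using eta by (simp_all add: power_le_one)
  have "(1 - \<eta>) ^ (2 * n) = (1 - \<eta>) ^ n * (1 - \<eta>) ^ n" by (simp add: power_add[symmetric] mult_2)
  also have "\<dots> \<le> (1 - \<eta>) ^ n" using p by (simp add: mult_left_le)
  finally have a: "(1 - \<eta>) ^ (2 * n) \<le> (1 - \<eta>) ^ n" .
  have b: "\<eta> / real n \<le> 1" using eta n1 by (simp add: divide_le_eq)
  have "\<rho> = (\<eta> / real n) * (1 - \<eta>) ^ (2 * n)" unfolding \<rho>_def by simp
  also have "\<dots> \<le> 1 * (1 - \<eta>) ^ (2 * n)" using b eta by (intro mult_right_mono) auto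
  finally have "\<rho> \<le> (1 - \<eta>) ^ (2 * n)" by simp
  thus "\<rho> \<le> (1 - \<eta>) ^ n" using a by linarith
  thus "\<rho> \<le> 1" using p by linarith
  show "0 < \<rho>" unfolding \<rho>_def using eta n1 by simp
qed

lemma keep: "(\<forall>k<n. \<theta> t k \<le> M) \<Longrightarrow> \<forall>k<n. \<theta> (t + s) k \<le> M"
proof (induction s)
  case 0 thus ?case by simp
next
  case (Suc s)
  have h: "\<forall>k<n. \<theta> (t + s) k \<le> M" using Suc by blast
  show ?case
  proof (intro allI impI)
    fix k assume "k < n"
    hence "\<theta> (Suc (t + s)) k \<le> (1 - \<eta>) * \<theta> (t + s) k + \<eta> * M" using stepA[OF h] by blast
    also have "\<dots> \<le> (1 - \<eta>) * M + \<eta> * M" using h \<open>k < n\<close> eta by (intro add_right_mono mult_left_mono) auto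
    finally show "\<theta> (t + Suc s) k \<le> M" by (simp add: algebra_simps)
  qed
qed

lemma decay:
  assumes "\<forall>k<n. \<theta> t k \<le> M" "j < n" "\<theta> t j \<le> M - \<delta>" "0 \<le> \<delta>"
  shows "\<theta> (t + s) j \<le> M - (1 - \<eta>) ^ s * \<delta>"
proof (induction s)
  case 0 thus ?case using assms by simp
next
  case (Suc s)
  have h: "\<forall>k<n. \<theta> (t + s) k \<le> M" using keep[OF assms(1)] by blast
  have "\<theta> (Suc (t + s)) j \<le> (1 - \<eta>) * \<theta> (t + s) j + \<eta> * M" using stepA[OF h] assms(2) by blast
  also have "\<dots> \<le> (1 - \<eta>) * (M - (1 - \<eta>) ^ s * \<delta>) + \<eta> * M" using Suc eta by (intro add_right_mono mult_left_mono) auto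
  finally show ?case by (simp add: algebra_simps)
qed

lemma decayn:
  assumes "\<forall>k<n. \<theta> t k \<le> M" "j < n" "\<theta> t j \<le> M - \<delta>" "0 \<le> \<delta>" "s \<le> n"
  shows "\<theta> (t + s) j \<le> M - (1 - \<eta>) ^ n * \<delta>"
proof -
  have "(1 - \<eta>) ^ n \<le> (1 - \<eta>) ^ s" using eta assms(5) by (intro power_decreasing) auto
  hence "(1 - \<eta>) ^ n * \<delta> \<le> (1 - \<eta>) ^ s * \<delta>" using assms(4) by (intro mult_right_mono) auto
  thus ?thesis using decay[OF assms(1-4), of s] by linarith
qed

lemma sweep:
  assumes all: "\<forall>k<n. \<theta> s k \<le> M" and d: "0 \<le> \<delta>"
    and cJ: "real (card {j. j < n \<and> \<theta> s j > M - \<delta>}) \<le> real n / 2"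
  shows "card {j. j < n \<and> \<theta> (s + n) j > M - \<rho> * \<delta>} \<le> card {j. j < n \<and> \<theta> s j > M - \<delta>} - 1"
proof -
  define J where "J = {j. j < n \<and> \<theta> s j > M - \<delta>}"
  define J' where "J' = {j. j < n \<and> \<theta> (s + n) j > M - \<rho> * \<delta>}"
  have rd: "\<rho> * \<delta> \<le> (1 - \<eta>) ^ n * \<delta>" using rho d by (intro mult_right_mono) auto
  have sub: "J' \<subseteq> J"
  proof
    fix k assume "k \<in> J'"
    hence k: "k < n" "\<theta> (s + n) k > M - \<rho> * \<delta>" unfolding J'_def by auto
    show "k \<in> J"
    proof (rule ccontr)
      assume "k \<notin> J"
      hence "\<theta> s k \<le> M - \<delta>" using k unfolding J_def by auto
      hence "\<theta> (s + n) k \<le> M - (1 - \<eta>) ^ n * \<delta>" using decayn[OF all k(1) _ d, of n] by simp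
      thus False using k rd by linarith
    qed
  qed
  have fin: "finite J" unfolding J_def by simp
  show ?thesis
  proof (cases "J = {}")
    case True thus ?thesis using sub unfolding J_def[symmetric] J'_def[symmetric] by auto
  next
    case False
    have Jsub: "J \<subseteq> {..<n}" unfolding J_def by auto
    obtain j where j: "j \<in> J" "card (N j \<inter> ({..<n} - J)) > card (N j \<inter> J)"
      using expd[OF Jsub False cJ[folded J_def]] by blast
    have jn: "j < n" using j Jsub by auto
    obtain u where u: "s \<le> u" "u < s + n" "u mod n = j" using exists_u[OF n1 jn] by blast
    have allu: "\<forall>k<n. \<theta> u k \<le> M" using keep[OF all, of "u - s"] u by simp
    define d' where "d' = (1 - \<eta>) ^ n * \<delta>"
    have d'0: "0 \<le> d'" unfolding d'_def using eta d by simp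
    have outs: "N j \<inter> ({..<n} - J) \<subseteq> {k\<in>N j. \<theta> u k \<le> M - d'}"
    proof
      fix k assume "k \<in> N j \<inter> ({..<n} - J)"
      hence k: "k \<in> N j" "k < n" "\<theta> s k \<le> M - \<delta>" unfolding J_def by auto
      have "\<theta> (s + (u - s)) k \<le> M - d'" unfolding d'_def using decayn[OF all k(2) k(3) d, of "u - s"] u by simp
      thus "k \<in> {k\<in>N j. \<theta> u k \<le> M - d'}" using k u by simp
    qed
    have finN: "finite (N j)" using Nsub finite_subset by blast
    have "card (N j) = card (N j \<inter> ({..<n} - J)) + card (N j \<inter> J)"
    proof -
      have "N j = (N j \<inter> ({..<n} - J)) \<union> (N j \<inter> J)" using Nsub[of j] by auto
      moreover have "card ((N j \<inter> ({..<n} - J)) \<union> (N j \<inter> J)) = card (N j \<inter> ({..<n} - J)) + card (N j \<inter> J)"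
        using finN by (intro card_Un_disjoint) auto
      ultimately show ?thesis by simp
    qed
    moreover have "card (N j \<inter> ({..<n} - J)) \<le> card {k\<in>N j. \<theta> u k \<le> M - d'}"
      using outs finN by (intro card_mono) auto
    ultimately have cc0: "card (N j) < 2 * card {k\<in>N j. \<theta> u k \<le> M - d'}"
      using j by linarith
    have cc: "card (N (u mod n)) < 2 * card {k\<in>N (u mod n). \<theta> u k \<le> M - d'}"
      using cc0 u(3) by simp
    have "\<theta> (Suc u) j \<le> M - \<eta> * d' / real n" using stepB[OF allu d'0 cc] u by simp
    hence a: "\<theta> (Suc u) j \<le> M - \<eta> * d' / real n" .
    have allSu: "\<forall>k<n. \<theta> (Suc u) k \<le> M" using keep[OF allu, of 1] by simp
    have e0: "0 \<le> \<eta> * d' / real n" using eta d'0 by simp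
    have "\<theta> (Suc u + (s + n - Suc u)) j \<le> M - (1 - \<eta>) ^ n * (\<eta> * d' / real n)"
      using decayn[OF allSu jn a e0, of "s + n - Suc u"] u by simp
    moreover have "(1 - \<eta>) ^ n * (\<eta> * d' / real n) = \<rho> * \<delta>"
      unfolding \<rho>_def d'_def by (simp add: power_add[symmetric] mult_2 mult_2_right algebra_simps)
    ultimately have "\<theta> (s + n) j \<le> M - \<rho> * \<delta>" using u by simp
    hence "j \<notin> J'" unfolding J'_def by auto
    hence "J' \<subseteq> J - {j}" using sub by auto
    hence "card J' \<le> card (J - {j})" using fin by (intro card_mono) auto
    also have "\<dots> = card J - 1" using j fin by simp
    finally show ?thesis unfolding J_def J'_def .
  qed
qed

lemma top_drop:
  assumes all: "\<forall>k<n. \<theta> t0 k \<le> M" and lam: "lv \<le> M"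
    and c0: "real (card {j. j < n \<and> \<theta> t0 j > lv}) \<le> real n / 2"
  shows "\<forall>k<n. \<theta> (t0 + n * n) k \<le> M - \<rho> ^ n * (M - lv)"
proof -
  define c where "c = card {j. j < n \<and> \<theta> t0 j > lv}"
  have ind: "card {j. j < n \<and> \<theta> (t0 + i * n) j > M - \<rho> ^ i * (M - lv)} \<le> c - i" for i
  proof (induction i)
    case 0 thus ?case unfolding c_def by simp
  next
    case (Suc i)
    have alli: "\<forall>k<n. \<theta> (t0 + i * n) k \<le> M" using keep[OF all] by blast
    have d: "0 \<le> \<rho> ^ i * (M - lv)" using rho lam by simp
    have "real (card {j. j < n \<and> \<theta> (t0 + i * n) j > M - \<rho> ^ i * (M - lv)}) \<le> real c"
      using Suc by simp
    also have "\<dots> \<le> real n / 2" using c0 c_def by simp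
    finally have cJ: "real (card {j. j < n \<and> \<theta> (t0 + i * n) j > M - \<rho> ^ i * (M - lv)}) \<le> real n / 2" .
    have "card {j. j < n \<and> \<theta> (t0 + i * n + n) j > M - \<rho> * (\<rho> ^ i * (M - lv))} \<le> c - i - 1"
      using sweep[OF alli d cJ] Suc by linarith
    thus ?case by (simp add: algebra_simps)
  qed
  have "c \<le> n" unfolding c_def by (rule order_trans[OF card_mono[of "{..<n}"]]) auto
  hence "card {j. j < n \<and> \<theta> (t0 + n * n) j > M - \<rho> ^ n * (M - lv)} = 0" using ind[of n] by (simp add: mult.commute)
  hence "{j. j < n \<and> \<theta> (t0 + n * n) j > M - \<rho> ^ n * (M - lv)} = {}" by simp
  thus ?thesis by (metis (no_types, lifting) empty_Collect_eq not_le)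
qed

end

locale cons2 = up: cons n \<eta> N \<theta> + lo: cons n \<eta> N "\<lambda>t j. - \<theta> t j" for n \<eta> N \<theta>
begin

definition "\<kappa> = 1 - up.\<rho> ^ n / 2"

lemma kappa: "0 < \<kappa>" "\<kappa> < 1"
proof -
  have "0 < up.\<rho> ^ n" "up.\<rho> ^ n \<le> 1" using up.rho by (simp_all add: power_le_one)
  thus "0 < \<kappa>" "\<kappa> < 1" unfolding \<kappa>_def by auto
qed

lemma rho_eq: "lo.\<rho> = up.\<rho>" unfolding cons.\<rho>_def by simp

lemma keep2:
  assumes "\<forall>k<n. L \<le> \<theta> t k \<and> \<theta> t k \<le> M"
  shows "\<forall>k<n. L \<le> \<theta> (t + s) k \<and> \<theta> (t + s) k \<le> M"
proof -
  have "\<forall>k<n. \<theta> (t + s) k \<le> M" using up.keep assms by blast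
  moreover have "\<forall>k<n. - \<theta> (t + s) k \<le> - L" using lo.keep[of t "-L" s] assms by auto
  ultimately show ?thesis by auto
qed

lemma contract:
  assumes b: "\<forall>k<n. L \<le> \<theta> t0 k \<and> \<theta> t0 k \<le> M" and LM: "L \<le> M"
  shows "\<exists>L' M'. M' - L' \<le> \<kappa> * (M - L) \<and> (\<forall>k<n. L' \<le> \<theta> (t0 + n * n) k \<and> \<theta> (t0 + n * n) k \<le> M')"
proof -
  define mid where "mid = (M + L) / 2"
  define A where "A = {j. j < n \<and> \<theta> t0 j > mid}"
  define B where "B = {j. j < n \<and> - \<theta> t0 j > - mid}"
  have "A \<inter> B = {}" unfolding A_def B_def by auto
  moreover have "A \<union> B \<subseteq> {..<n}" unfolding A_def B_def by auto
  ultimately have "card A + card B \<le> n"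
    by (metis card_Un_disjoint card_lessThan card_mono finite_Un finite_lessThan finite_subset)
  hence "real (card A) \<le> real n / 2 \<or> real (card B) \<le> real n / 2" by linarith
  have kk: "\<kappa> * (M - L) = (M - L) - up.\<rho> ^ n * (M - L) / 2" unfolding \<kappa>_def by (simp add: algebra_simps)
  have md1: "M - mid = (M - L) / 2" unfolding mid_def by (simp add: field_simps)
  have md2: "mid - L = (M - L) / 2" unfolding mid_def by (simp add: field_simps)
  note md = md1 md2
  have r1: "up.\<rho> ^ n * (M - mid) = up.\<rho> ^ n * (M - L) / 2" "up.\<rho> ^ n * (mid - L) = up.\<rho> ^ n * (M - L) / 2"
    unfolding md by simp_all
  have bt: "\<forall>k<n. L \<le> \<theta> (t0 + n * n) k \<and> \<theta> (t0 + n * n) k \<le> M" using keep2[OF b] by blast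
  show ?thesis
  proof (cases "real (card A) \<le> real n / 2")
    case True
    have p1: "\<forall>k<n. \<theta> t0 k \<le> M" using b by blast
    have p2: "mid \<le> M" using LM unfolding mid_def by (simp add: field_simps)
    have p3: "real (card {j. j < n \<and> \<theta> t0 j > mid}) \<le> real n / 2" using True unfolding A_def .
    have td: "\<forall>k<n. \<theta> (t0 + n * n) k \<le> M - up.\<rho> ^ n * (M - mid)"
      by (rule up.top_drop[OF p1 p2 p3])
    moreover have "M - up.\<rho> ^ n * (M - mid) - L = \<kappa> * (M - L)" unfolding kk r1 by simp
    ultimately show ?thesis using bt by (intro exI[of _ L] exI[of _ "M - up.\<rho> ^ n * (M - mid)"]) auto
  next
    case False
    hence cB: "real (card B) \<le> real n / 2" using \<open>real (card A) \<le> real n / 2 \<or> real (card B) \<le> real n / 2\<close> by blast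
    have p1: "\<forall>k<n. - \<theta> t0 k \<le> - L" using b by simp
    have p2: "- mid \<le> - L" using LM unfolding mid_def by (simp add: field_simps)
    have p3: "real (card {j. j < n \<and> - \<theta> t0 j > - mid}) \<le> real n / 2" using cB unfolding B_def .
    have td: "\<forall>k<n. - \<theta> (t0 + n * n) k \<le> - L - lo.\<rho> ^ n * (- L - - mid)"
      by (rule lo.top_drop[OF p1 p2 p3])
    have e: "- L - - mid = mid - L" by simp
    have H: "\<forall>k<n. L + up.\<rho> ^ n * (mid - L) \<le> \<theta> (t0 + n * n) k"
    proof (intro allI impI)
      fix k assume "k < n"
      hence "- \<theta> (t0 + n * n) k \<le> - L - lo.\<rho> ^ n * (- L - - mid)" using td by blast
      hence "- \<theta> (t0 + n * n) k \<le> - L - up.\<rho> ^ n * (mid - L)" using e rho_eq by metis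
      thus "L + up.\<rho> ^ n * (mid - L) \<le> \<theta> (t0 + n * n) k" by linarith
    qed
    moreover have "M - (L + up.\<rho> ^ n * (mid - L)) = \<kappa> * (M - L)" unfolding kk r1 by simp
    ultimately show ?thesis using bt by (intro exI[of _ "L + up.\<rho> ^ n * (mid - L)"] exI[of _ M]) auto
  qed
qed

lemma geom:
  assumes b0: "\<forall>k<n. L0 \<le> \<theta> 0 k \<and> \<theta> 0 k \<le> M0"
  shows "\<exists>L M. M - L \<le> \<kappa> ^ (t div (n * n)) * (M0 - L0) \<and> (\<forall>k<n. L \<le> \<theta> t k \<and> \<theta> t k \<le> M)"
proof -
  have n1: "1 \<le> n" by (rule up.n1)
  have P: "\<exists>L M. M - L \<le> \<kappa> ^ i * (M0 - L0) \<and> (\<forall>k<n. L \<le> \<theta> (i * (n * n)) k \<and> \<theta> (i * (n * n)) k \<le> M)" for i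
  proof (induction i)
    case 0 thus ?case using b0 by (intro exI[of _ L0] exI[of _ M0]) auto
  next
    case (Suc i)
    then obtain L M where LM: "M - L \<le> \<kappa> ^ i * (M0 - L0)" "\<forall>k<n. L \<le> \<theta> (i * (n * n)) k \<and> \<theta> (i * (n * n)) k \<le> M"
      by blast
    have "L \<le> M" using LM(2) n1 by force
    then obtain L' M' where L'M': "M' - L' \<le> \<kappa> * (M - L)"
      "\<forall>k<n. L' \<le> \<theta> (i * (n * n) + n * n) k \<and> \<theta> (i * (n * n) + n * n) k \<le> M'"
      using contract[OF LM(2)] by blast
    have "\<kappa> * (M - L) \<le> \<kappa> * (\<kappa> ^ i * (M0 - L0))" using LM(1) kappa by (intro mult_left_mono) auto
    hence "M' - L' \<le> \<kappa> ^ Suc i * (M0 - L0)" using L'M'(1) by simp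
    moreover have "Suc i * (n * n) = i * (n * n) + n * n" by simp
    ultimately show ?case using L'M'(2) by metis
  qed
  obtain L M where LM: "M - L \<le> \<kappa> ^ (t div (n * n)) * (M0 - L0)"
    "\<forall>k<n. L \<le> \<theta> ((t div (n * n)) * (n * n)) k \<and> \<theta> ((t div (n * n)) * (n * n)) k \<le> M"
    using P by blast
  have "t = (t div (n * n)) * (n * n) + t mod (n * n)" by (metis div_mult_mod_eq)
  hence "\<forall>k<n. L \<le> \<theta> t k \<and> \<theta> t k \<le> M" using keep2[OF LM(2), of "t mod (n * n)"] by metis
  thus ?thesis using LM(1) by blast
qed

end

lemma ar1: fixes e a m th dn :: real
  assumes "e * a \<le> e * (m - th - dn)" "(1 - e) * th \<le> (1 - e) * m"
  shows "th + e * a \<le> m - e * dn"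
proof -
  have "e * a \<le> e * m - e * th - e * dn" using assms(1) by (simp add: algebra_simps)
  moreover have "th - e * th \<le> m - e * m" using assms(2) by (simp add: algebra_simps)
  ultimately show ?thesis by linarith
qed
lemma ar2: fixes e a l th dn :: real
  assumes "e * (l - th + dn) \<le> e * a" "(1 - e) * l \<le> (1 - e) * th"
  shows "l + e * dn \<le> th + e * a"
proof -
  have "e * l - e * th + e * dn \<le> e * a" using assms(1) by (simp add: algebra_simps)
  moreover have "l - e * l \<le> th - e * th" using assms(2) by (simp add: algebra_simps)
  ultimately show ?thesis by linarith
qed
lemma ar3: fixes e a r th :: real
  assumes "e * a \<le> e * (r - th)" "e * (- r - th) \<le> e * a" "(1 - e) * th \<le> (1 - e) * r" "(1 - e) * (- r) \<le> (1 - e) * th"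
  shows "\<bar>th + e * a\<bar> \<le> r"
proof -
  have "e * a \<le> e * r - e * th" using assms(1) by (simp add: algebra_simps)
  moreover have "- (e * r) - e * th \<le> e * a" using assms(2) by (simp add: algebra_simps)
  moreover have "th - e * th \<le> r - e * r" using assms(3) by (simp add: algebra_simps)
  moreover have "- r + e * r \<le> th - e * th" using assms(4) by (simp add: algebra_simps)
  ultimately show ?thesis by (simp only: abs_le_iff) linarith
qed

lemma Arg_cis_small: "\<bar>x\<bar> < pi \<Longrightarrow> Arg (cis x) = x"
  by (intro Arg_cis) auto

lemma unit_cis_Arg: "cmod u = 1 \<Longrightarrow> cis (Arg u) = u"
proof -
  assume "cmod u = 1"
  hence "u \<noteq> 0" by auto
  hence "cis (Arg u) = sgn u" by (rule cis_Arg)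
  thus ?thesis using \<open>cmod u = 1\<close> by (simp add: sgn_div_norm)
qed

lemma size_filter_image_mset_set:
  "finite A \<Longrightarrow> size (filter_mset P (image_mset f (mset_set A))) = card {x\<in>A. P (f x)}"
  by (simp add: filter_mset_image_mset)

locale conc =
  fixes n :: nat and E Eg Eb :: "(nat \<times> nat) set"
    and zs :: "nat \<Rightarrow> complex" and zobs :: "nat \<Rightarrow> nat \<Rightarrow> complex"
    and z :: "nat \<Rightarrow> nat \<Rightarrow> complex" and \<eta> :: real and c :: complex
  assumes n1: "1 \<le> n"
    and graph: "E \<subseteq> {..<n} \<times> {..<n}"
    and split: "E = Eg \<union> Eb" "Eg \<inter> Eb = {}"
    and zs_unit: "\<forall>j<n. cmod (zs j) = 1"
    and obs_good: "\<forall>(j, k) \<in> Eg. zobs j k = zs j * cnj (zs k)"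
    and alpha0: "\<forall>j<n. real (card (nbhd Eb j)) / real (card (nbhd E j)) < 1 / 4"
    and init_unit: "\<forall>j<n. cmod (z 0 j) = 1"
    and c1: "cmod c = 1"
    and initc: "\<forall>j<n. d_ang c (cnj (zs j) * z 0 j) < pi / 2"
    and eta: "0 < \<eta>" "\<eta> < 1"
    and step_j: "\<forall>t. z (Suc t) (t mod n) = tas_update \<eta> E zobs (z t) (t mod n)"
    and step_other: "\<forall>t. \<forall>k<n. k \<noteq> t mod n \<longrightarrow> z (Suc t) k = z t k"
begin

definition "w t j = cnj (zs j) * z t j"
definition "\<theta> t j = Arg (w t j * cnj c)"
definition "R = Max ((\<lambda>j. \<bar>\<theta> 0 j\<bar>) ` {..<n})"
definition "Xm t j = image_mset (\<lambda>k. Log_c (z t j) (zobs j k * z t k)) (mset_set (nbhd E j))"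
definition "A t j = ave (trim25 (Xm t j))"
definition "Gm t j = image_mset (\<lambda>k. \<theta> t k - \<theta> t j) (mset_set (nbhd Eg j))"

lemma tmod: "t mod n < n" using n1 by simp

lemma Nsub: "nbhd E j \<subseteq> {..<n}" using graph unfolding nbhd_def by auto
lemma finN: "finite (nbhd E j)" using Nsub finite_subset by blast
lemma Nsplit: "nbhd E j = nbhd Eg j \<union> nbhd Eb j" "nbhd Eg j \<inter> nbhd Eb j = {}"
  using split unfolding nbhd_def by auto
lemma finNg: "finite (nbhd Eg j)" "finite (nbhd Eb j)" using finN Nsplit by (metis finite_Un)+
lemma NgE: "k \<in> nbhd Eg j \<Longrightarrow> (j, k) \<in> Eg" unfolding nbhd_def by simp
lemma Ng_lt: "k \<in> nbhd Eg j \<Longrightarrow> k < n" using Nsub Nsplit by auto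

lemma zunit: "j < n \<Longrightarrow> cmod (z t j) = 1"
proof (induction t arbitrary: j)
  case 0 thus ?case using init_unit by simp
next
  case (Suc t)
  show ?case
  proof (cases "j = t mod n")
    case True
    have "z (Suc t) j = cis (\<eta> * A t j) * z t j"
      using step_j True unfolding tas_update_def Exp_c_def A_def Xm_def by simp
    thus ?thesis using Suc by (simp add: norm_mult)
  next
    case False thus ?thesis using step_other Suc by simp
  qed
qed

lemma wunit: "j < n \<Longrightarrow> cmod (w t j) = 1"
  unfolding w_def using zunit zs_unit by (simp add: norm_mult)

lemma wrep: "j < n \<Longrightarrow> w t j * cnj c = cis (\<theta> t j)"
  unfolding \<theta>_def using wunit c1 by (simp add: unit_cis_Arg norm_mult)

lemma ccnj: "c * cnj c = 1"
proof -
  have "c * cnj c = of_real ((cmod c)\<^sup>2)" by (rule complex_norm_square[symmetric])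
  thus ?thesis using c1 by simp
qed

lemma cis_diff: "j < n \<Longrightarrow> k < n \<Longrightarrow> w t k * cnj (w t j) = cis (\<theta> t k - \<theta> t j)"
proof -
  assume jk: "j < n" "k < n"
  have "w t k * cnj (w t j) = (w t k * cnj c) * cnj (w t j * cnj c)"
    using ccnj by (simp add: algebra_simps)
  also have "\<dots> = cis (\<theta> t k) * cnj (cis (\<theta> t j))" using wrep jk by simp
  also have "\<dots> = cis (\<theta> t k - \<theta> t j)" by (simp add: cis_cnj cis_mult)
  finally show ?thesis .
qed

lemma theta0: "j < n \<Longrightarrow> \<bar>\<theta> 0 j\<bar> < pi / 2"
proof -
  assume j: "j < n"
  define v where "v = c * cnj (w 0 j)"
  have "\<bar>Arg v\<bar> < pi / 2" using initc j unfolding d_ang_def v_def w_def by simp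
  moreover have "w 0 j * cnj c = cnj v" unfolding v_def by simp
  ultimately show ?thesis unfolding \<theta>_def by (simp add: Arg_cnj)
qed

lemma Rprops: "0 \<le> R" "R < pi / 2" "\<And>j. j < n \<Longrightarrow> \<bar>\<theta> 0 j\<bar> \<le> R"
proof -
  have fin: "finite ((\<lambda>j. \<bar>\<theta> 0 j\<bar>) ` {..<n})" "(\<lambda>j. \<bar>\<theta> 0 j\<bar>) ` {..<n} \<noteq> {}" using n1 by (auto simp: lessThan_empty_iff)
  show "\<And>j. j < n \<Longrightarrow> \<bar>\<theta> 0 j\<bar> \<le> R" unfolding R_def using fin by (intro Max_ge) auto
  hence "\<bar>\<theta> 0 0\<bar> \<le> R" using n1 by simp
  thus "0 \<le> R" by linarith
  show "R < pi / 2" unfolding R_def using fin theta0 by (subst Max_less_iff) auto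
qed

context
  fixes t :: nat
  assumes I: "\<forall>k<n. \<bar>\<theta> t k\<bar> \<le> R"
begin

abbreviation "jj \<equiv> t mod n"

lemma good_log: "k \<in> nbhd Eg jj \<Longrightarrow> Log_c (z t jj) (zobs jj k * z t k) = \<theta> t k - \<theta> t jj"
proof -
  assume k: "k \<in> nbhd Eg jj"
  have kn: "k < n" using Ng_lt k by simp
  have "zobs jj k = zs jj * cnj (zs k)" using obs_good NgE[OF k] by auto
  hence "zobs jj k * z t k * cnj (z t jj) = w t k * cnj (w t jj)"
    unfolding w_def by (simp add: algebra_simps)
  also have "\<dots> = cis (\<theta> t k - \<theta> t jj)" using cis_diff kn tmod by simp
  finally have e: "zobs jj k * z t k * cnj (z t jj) = cis (\<theta> t k - \<theta> t jj)" .
  have h1: "\<bar>\<theta> t k\<bar> \<le> R" "\<bar>\<theta> t jj\<bar> \<le> R" using I kn tmod by blast+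
  have "\<bar>\<theta> t k - \<theta> t jj\<bar> < pi" using h1 Rprops(2) by linarith
  thus ?thesis unfolding Log_c_def e by (rule Arg_cis_small)
qed

lemma X_split: "Xm t jj = Gm t jj + image_mset (\<lambda>k. Log_c (z t jj) (zobs jj k * z t k)) (mset_set (nbhd Eb jj))"
proof -
  have "mset_set (nbhd E jj) = mset_set (nbhd Eg jj) + mset_set (nbhd Eb jj)"
    using Nsplit finNg by (simp add: mset_set_Union)
  moreover have "image_mset (\<lambda>k. Log_c (z t jj) (zobs jj k * z t k)) (mset_set (nbhd Eg jj)) = Gm t jj"
    unfolding Gm_def using good_log finNg by (intro image_mset_cong) auto
  ultimately show ?thesis unfolding Xm_def by simp
qed

lemma G_sub: "Gm t jj \<subseteq># Xm t jj" using X_split by simp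

lemma sizeX: "size (Xm t jj) = card (nbhd E jj)" unfolding Xm_def by simp
lemma sizeG: "size (Gm t jj) = card (nbhd Eg jj)" unfolding Gm_def by simp

lemma cardsplit: "card (nbhd E jj) = card (nbhd Eg jj) + card (nbhd Eb jj)"
  using Nsplit finNg by (metis card_Un_disjoint)

lemma badcnt: "nbhd E jj \<noteq> {} \<Longrightarrow> 4 * (size (Xm t jj) - size (Gm t jj)) < size (Xm t jj)"
proof -
  assume ne: "nbhd E jj \<noteq> {}"
  hence pos: "0 < real (card (nbhd E jj))" using finN by (simp add: card_gt_0_iff)
  have "real (card (nbhd Eb jj)) / real (card (nbhd E jj)) < 1 / 4" using alpha0 tmod by blast
  hence "real (card (nbhd Eb jj)) < 1 / 4 * real (card (nbhd E jj))" using pos by (simp add: divide_less_eq)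
  hence "4 * real (card (nbhd Eb jj)) < real (card (nbhd E jj))" by linarith
  hence "4 * card (nbhd Eb jj) < card (nbhd E jj)" by linarith
  thus ?thesis unfolding sizeX sizeG using cardsplit by simp
qed

lemma A_empty: "nbhd E jj = {} \<Longrightarrow> A t jj = 0"
  unfolding A_def Xm_def by (simp add: trim25_def ave_def)

lemma A_le: assumes "\<forall>k<n. \<theta> t k \<le> M" shows "A t jj \<le> M - \<theta> t jj"
proof (cases "nbhd E jj = {}")
  case True thus ?thesis using A_empty assms tmod by simp
next
  case False
  interpret tc: trimctx "Xm t jj" "Gm t jj" using G_sub badcnt[OF False] by unfold_locales
  have "\<forall>x\<in>#Gm t jj. x \<le> M - \<theta> t jj" unfolding Gm_def using assms Ng_lt finNg by auto
  thus ?thesis unfolding A_def by (rule tc.ave_le)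
qed

lemma A_ge: assumes "\<forall>k<n. L \<le> \<theta> t k" shows "L - \<theta> t jj \<le> A t jj"
proof (cases "nbhd E jj = {}")
  case True thus ?thesis using A_empty assms tmod by simp
next
  case False
  interpret tc: trimctx "Xm t jj" "Gm t jj" using G_sub badcnt[OF False] by unfold_locales
  have "\<forall>x\<in>#Gm t jj. L - \<theta> t jj \<le> x" unfolding Gm_def using assms Ng_lt finNg by auto
  thus ?thesis unfolding A_def by (rule tc.ave_ge)
qed

lemma cnt_good:
  assumes "card (nbhd E jj) < 2 * card {k\<in>nbhd E jj. P k}"
  shows "card (nbhd E jj) < 4 * card {k\<in>nbhd Eg jj. P k}"
proof -
  have ne: "nbhd E jj \<noteq> {}" using assms by auto
  have "{k\<in>nbhd E jj. P k} \<subseteq> {k\<in>nbhd Eg jj. P k} \<union> nbhd Eb jj" using Nsplit by auto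
  hence "card {k\<in>nbhd E jj. P k} \<le> card ({k\<in>nbhd Eg jj. P k} \<union> nbhd Eb jj)"
    using finNg by (intro card_mono) auto
  also have "\<dots> \<le> card {k\<in>nbhd Eg jj. P k} + card (nbhd Eb jj)" by (rule card_Un_le)
  finally have "card {k\<in>nbhd E jj. P k} \<le> card {k\<in>nbhd Eg jj. P k} + card (nbhd Eb jj)" .
  moreover have "4 * card (nbhd Eb jj) < card (nbhd E jj)"
    using badcnt[OF ne] unfolding sizeX sizeG using cardsplit by simp
  ultimately show ?thesis using assms by linarith
qed

lemma cardN_le: "card (nbhd E jj) \<le> n"
  using card_mono[OF _ Nsub] by (metis card_lessThan finite_lessThan)

lemma A_le2:
  assumes all: "\<forall>k<n. \<theta> t k \<le> M" and d: "0 \<le> d"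
    and cnt: "card (nbhd E jj) < 2 * card {k\<in>nbhd E jj. \<theta> t k \<le> M - d}"
  shows "\<theta> t jj + \<eta> * A t jj \<le> M - \<eta> * d / real n"
proof -
  have ne: "nbhd E jj \<noteq> {}"
  proof
    assume "nbhd E jj = {}"
    thus False using cnt by simp
  qed
  interpret tc: trimctx "Xm t jj" "Gm t jj" using G_sub badcnt[OF ne] by unfold_locales
  have G1: "\<forall>x\<in>#Gm t jj. x \<le> M - \<theta> t jj" unfolding Gm_def using all Ng_lt finNg by auto
  have c4: "card (nbhd E jj) < 4 * card {k\<in>nbhd Eg jj. \<theta> t k \<le> M - d}" by (rule cnt_good[OF cnt])
  have "size (filter_mset (\<lambda>x. x \<le> M - d - \<theta> t jj) (Gm t jj)) = card {k\<in>nbhd Eg jj. \<theta> t k - \<theta> t jj \<le> M - d - \<theta> t jj}"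
    unfolding Gm_def using finNg(1)[of jj] by (simp add: filter_mset_image_mset)
  also have "{k\<in>nbhd Eg jj. \<theta> t k - \<theta> t jj \<le> M - d - \<theta> t jj} = {k\<in>nbhd Eg jj. \<theta> t k \<le> M - d}" by auto
  finally have "real tc.m < 4 * real (size (filter_mset (\<lambda>x. x \<le> M - d - \<theta> t jj) (Gm t jj)))"
    using c4 unfolding tc.m_def sizeX by simp
  hence "A t jj \<le> (M - \<theta> t jj) - ((M - \<theta> t jj) - (M - d - \<theta> t jj)) / real tc.m"
    unfolding A_def using G1 d by (intro tc.ave_le2) auto
  hence a: "A t jj \<le> M - \<theta> t jj - d / real (card (nbhd E jj))" unfolding tc.m_def sizeX by simp
  have mpos: "0 < real (card (nbhd E jj))" using ne finN by (simp add: card_gt_0_iff)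
  have "d / real n \<le> d / real (card (nbhd E jj))" using d mpos cardN_le by (intro divide_left_mono) auto
  hence "A t jj \<le> M - \<theta> t jj - d / real n" using a by linarith
  hence h1: "\<eta> * A t jj \<le> \<eta> * (M - \<theta> t jj - d / real n)" using eta by (intro mult_left_mono) auto
  have thM: "\<theta> t jj \<le> M" using all tmod by blast
  have h2: "(1 - \<eta>) * \<theta> t jj \<le> (1 - \<eta>) * M" using thM eta by (intro mult_left_mono) auto
  have "\<theta> t jj + \<eta> * A t jj \<le> M - \<eta> * (d / real n)" by (rule ar1[OF h1 h2])
  thus ?thesis by simp
qed

lemma A_ge2:
  assumes all: "\<forall>k<n. L \<le> \<theta> t k" and d: "0 \<le> d"
    and cnt: "card (nbhd E jj) < 2 * card {k\<in>nbhd E jj. L + d \<le> \<theta> t k}"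
  shows "L + \<eta> * d / real n \<le> \<theta> t jj + \<eta> * A t jj"
proof -
  have ne: "nbhd E jj \<noteq> {}"
  proof
    assume "nbhd E jj = {}"
    thus False using cnt by simp
  qed
  interpret tc: trimctx "Xm t jj" "Gm t jj" using G_sub badcnt[OF ne] by unfold_locales
  have G1: "\<forall>x\<in>#Gm t jj. L - \<theta> t jj \<le> x" unfolding Gm_def using all Ng_lt finNg by auto
  have c4: "card (nbhd E jj) < 4 * card {k\<in>nbhd Eg jj. L + d \<le> \<theta> t k}" by (rule cnt_good[OF cnt])
  have "size (filter_mset (\<lambda>x. L + d - \<theta> t jj \<le> x) (Gm t jj)) = card {k\<in>nbhd Eg jj. L + d - \<theta> t jj \<le> \<theta> t k - \<theta> t jj}"
    unfolding Gm_def using finNg(1)[of jj] by (simp add: filter_mset_image_mset)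
  also have "{k\<in>nbhd Eg jj. L + d - \<theta> t jj \<le> \<theta> t k - \<theta> t jj} = {k\<in>nbhd Eg jj. L + d \<le> \<theta> t k}" by auto
  finally have "real tc.m < 4 * real (size (filter_mset (\<lambda>x. L + d - \<theta> t jj \<le> x) (Gm t jj)))"
    using c4 unfolding tc.m_def sizeX by simp
  hence "(L - \<theta> t jj) + ((L + d - \<theta> t jj) - (L - \<theta> t jj)) / real tc.m \<le> A t jj"
    unfolding A_def using G1 d by (intro tc.ave_ge2) auto
  hence a: "L - \<theta> t jj + d / real (card (nbhd E jj)) \<le> A t jj" unfolding tc.m_def sizeX by simp
  have mpos: "0 < real (card (nbhd E jj))" using ne finN by (simp add: card_gt_0_iff)
  have "d / real n \<le> d / real (card (nbhd E jj))" using d mpos cardN_le by (intro divide_left_mono) auto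
  hence "L - \<theta> t jj + d / real n \<le> A t jj" using a by linarith
  hence h1: "\<eta> * (L - \<theta> t jj + d / real n) \<le> \<eta> * A t jj" using eta by (intro mult_left_mono) auto
  have thL: "L \<le> \<theta> t jj" using all tmod by blast
  have h2: "(1 - \<eta>) * L \<le> (1 - \<eta>) * \<theta> t jj" using thL eta by (intro mult_left_mono) auto
  have "L + \<eta> * (d / real n) \<le> \<theta> t jj + \<eta> * A t jj" by (rule ar2[OF h1 h2])
  thus ?thesis by simp
qed

lemma new_bounds: "\<bar>\<theta> t jj + \<eta> * A t jj\<bar> \<le> R"
proof -
  have u: "A t jj \<le> R - \<theta> t jj" using I by (intro A_le) auto
  have l: "- R - \<theta> t jj \<le> A t jj" using I by (intro A_ge) auto
  have h1: "\<eta> * A t jj \<le> \<eta> * (R - \<theta> t jj)" using u eta by (intro mult_left_mono) auto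
  have h2: "\<eta> * (- R - \<theta> t jj) \<le> \<eta> * A t jj" using l eta by (intro mult_left_mono) auto
  have th: "\<bar>\<theta> t jj\<bar> \<le> R" using I tmod by blast
  have h3: "(1 - \<eta>) * \<theta> t jj \<le> (1 - \<eta>) * R" using th eta by (intro mult_left_mono) auto
  have h4: "(1 - \<eta>) * (- R) \<le> (1 - \<eta>) * \<theta> t jj" using th eta by (intro mult_left_mono) auto
  show ?thesis by (rule ar3[OF h1 h2 h3 h4])
qed

lemma theta_next: "\<theta> (Suc t) jj = \<theta> t jj + \<eta> * A t jj"
proof -
  have "z (Suc t) jj = cis (\<eta> * A t jj) * z t jj"
    using step_j unfolding tas_update_def Exp_c_def A_def Xm_def by simp
  hence "w (Suc t) jj * cnj c = cis (\<eta> * A t jj) * (w t jj * cnj c)" unfolding w_def by (simp add: algebra_simps)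
  also have "\<dots> = cis (\<theta> t jj + \<eta> * A t jj)" using wrep tmod by (simp add: cis_mult add.commute)
  finally have e: "w (Suc t) jj * cnj c = cis (\<theta> t jj + \<eta> * A t jj)" .
  have "\<bar>\<theta> t jj + \<eta> * A t jj\<bar> < pi" using new_bounds Rprops(2) pi_gt_zero by linarith
  thus ?thesis unfolding \<theta>_def e by (rule Arg_cis_small)
qed

lemma theta_other: "k < n \<Longrightarrow> k \<noteq> jj \<Longrightarrow> \<theta> (Suc t) k = \<theta> t k"
  unfolding \<theta>_def w_def using step_other by simp

lemma I_next: "\<forall>k<n. \<bar>\<theta> (Suc t) k\<bar> \<le> R"
proof (intro allI impI)
  fix k assume k: "k < n"
  show "\<bar>\<theta> (Suc t) k\<bar> \<le> R"
  proof (cases "k = jj")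
    case True thus ?thesis using theta_next new_bounds by simp
  next
    case False thus ?thesis using theta_other[OF k False] I k by simp
  qed
qed

end

lemma Iall: "\<forall>k<n. \<bar>\<theta> t k\<bar> \<le> R"
proof (induction t)
  case 0 thus ?case using Rprops by simp
next
  case (Suc t) thus ?case using I_next by blast
qed

end

lemma ar4: fixes e a m th :: real
  assumes "e * a \<le> e * (m - th)" shows "th + e * a \<le> (1 - e) * th + e * m"
proof -
  have "e * a \<le> e * m - e * th" using assms by (simp add: algebra_simps)
  moreover have "(1 - e) * th = th - e * th" by (simp add: algebra_simps)
  ultimately show ?thesis by linarith
qed

lemma ar5: fixes e m th :: real
  assumes "e * th \<le> e * m" shows "th \<le> (1 - e) * th + e * m"
proof -
  have "(1 - e) * th = th - e * th" by (simp add: algebra_simps)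
  thus ?thesis using assms by linarith
qed

lemma ar6: fixes e a m th :: real
  assumes "e * (- m - th) \<le> e * a" shows "- (th + e * a) \<le> (1 - e) * (- th) + e * m"
proof -
  have "- (e * m) - e * th \<le> e * a" using assms by (simp add: algebra_simps)
  moreover have "(1 - e) * (- th) = - th + e * th" by (simp add: algebra_simps)
  ultimately show ?thesis by linarith
qed

lemma geo_conv:
  fixes \<kappa> :: real and N t :: nat
  assumes k: "0 < \<kappa>" "\<kappa> < 1" and N: "1 \<le> N"
  shows "\<kappa> ^ (t div N) \<le> (1 / \<kappa>) * (\<kappa> powr (1 / real N)) ^ t"
proof -
  have "(\<kappa> powr (1 / real N)) ^ t = (\<kappa> powr (1 / real N)) powr real t"
    using k by (simp add: powr_realpow)
  also have "\<dots> = \<kappa> powr (real t / real N)" by (simp add: powr_powr)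
  finally have e1: "(\<kappa> powr (1 / real N)) ^ t = \<kappa> powr (real t / real N)" .
  have "real t = real N * real (t div N) + real (t mod N)"
    by (metis div_mult_mod_eq of_nat_add of_nat_mult mult.commute)
  moreover have "real (t mod N) < real N" using N by simp
  ultimately have "real t < real N * (real (t div N) + 1)" by (simp add: algebra_simps)
  hence le: "real t / real N \<le> real (t div N) + 1" using N by (simp add: divide_le_eq mult.commute)
  have "\<kappa> powr (real (t div N) + 1) \<le> \<kappa> powr (real t / real N)"
    using k by (intro powr_mono' le) auto
  moreover have "\<kappa> powr (real (t div N) + 1) = \<kappa> ^ (t div N) * \<kappa>"
    using k by (simp add: powr_add powr_realpow)
  ultimately have "\<kappa> ^ (t div N) * \<kappa> \<le> (\<kappa> powr (1 / real N)) ^ t" using e1 by simp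
  thus ?thesis using k by (simp add: field_simps)
qed

context conc
begin

lemma dang: "j < n \<Longrightarrow> k < n \<Longrightarrow> d_ang (cnj (zs j) * z t j) (cnj (zs k) * z t k) = \<bar>\<theta> t j - \<theta> t k\<bar>"
proof -
  assume jk: "j < n" "k < n"
  have "cnj (zs j) * z t j * cnj (cnj (zs k) * z t k) = w t j * cnj (w t k)" unfolding w_def by simp
  also have "\<dots> = cis (\<theta> t j - \<theta> t k)" using cis_diff jk by simp
  finally have e: "cnj (zs j) * z t j * cnj (cnj (zs k) * z t k) = cis (\<theta> t j - \<theta> t k)" .
  have h: "\<bar>\<theta> t j\<bar> \<le> R" "\<bar>\<theta> t k\<bar> \<le> R" using Iall jk by blast+
  have "\<bar>\<theta> t j - \<theta> t k\<bar> < pi" using h Rprops(2) by linarith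
  hence "Arg (cis (\<theta> t j - \<theta> t k)) = \<theta> t j - \<theta> t k" by (rule Arg_cis_small)
  thus ?thesis unfolding d_ang_def e by simp
qed

lemma delta_bound:
  assumes b: "\<forall>k<n. L \<le> \<theta> t k \<and> \<theta> t k \<le> M"
  shows "0 \<le> delta E zs (z t)" "delta E zs (z t) \<le> M - L"
proof -
  define D where "D = {d_ang (cnj (zs j) * z t j) (cnj (zs k) * z t k) | j k. (j, k) \<in> E}"
  have "D = (\<lambda>p. d_ang (cnj (zs (fst p)) * z t (fst p)) (cnj (zs (snd p)) * z t (snd p))) ` E"
    unfolding D_def by force
  moreover have "finite E" using graph finite_subset by blast
  ultimately have finD: "finite D" by simp
  have dd: "delta E zs (z t) = Max (insert 0 D)" unfolding delta_def D_def ..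
  show "0 \<le> delta E zs (z t)" unfolding dd using finD by simp
  have LM: "L \<le> M" using b n1 by force
  have "\<forall>x\<in>D. x \<le> M - L"
  proof
    fix x assume "x \<in> D"
    then obtain j k where jk: "(j, k) \<in> E" "x = d_ang (cnj (zs j) * z t j) (cnj (zs k) * z t k)"
      unfolding D_def by blast
    hence jkn: "j < n" "k < n" using graph by auto
    have "x = \<bar>\<theta> t j - \<theta> t k\<bar>" using dang jkn jk by simp
    moreover have "L \<le> \<theta> t j" "\<theta> t j \<le> M" "L \<le> \<theta> t k" "\<theta> t k \<le> M" using b jkn by auto
    ultimately show "x \<le> M - L" by linarith
  qed
  thus "delta E zs (z t) \<le> M - L" unfolding dd using finD LM by simp
qed

lemma main_bound:
  assumes expander: "\<forall>J. J \<subseteq> {..<n} \<and> J \<noteq> {} \<and> real (card J) \<le> real n / 2 \<longrightarrow>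
                      (\<exists>j\<in>J. card (nbhd E j \<inter> ({..<n} - J)) > card (nbhd E j \<inter> J))"
  shows "\<exists>\<kappa>. 0 < \<kappa> \<and> \<kappa> < 1 \<and> (\<forall>t. 0 \<le> delta E zs (z t) \<and> delta E zs (z t) \<le> \<kappa> ^ (t div (n * n)) * (R - - R))"
proof -
  have expd: "\<exists>j\<in>J. card (nbhd E j \<inter> ({..<n} - J)) > card (nbhd E j \<inter> J)"
    if "J \<subseteq> {..<n}" "J \<noteq> {}" "real (card J) \<le> real n / 2" for J
    using expander that by blast
  have Nsub': "nbhd E j \<subseteq> {..<n}" for j by (rule Nsub)
  have stA: "\<forall>j<n. \<theta> (Suc t) j \<le> (1 - \<eta>) * \<theta> t j + \<eta> * M" if all: "\<forall>k<n. \<theta> t k \<le> M" for t M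
  proof (intro allI impI)
    fix j assume j: "j < n"
    show "\<theta> (Suc t) j \<le> (1 - \<eta>) * \<theta> t j + \<eta> * M"
    proof (cases "j = t mod n")
      case True
      have "A t (t mod n) \<le> M - \<theta> t (t mod n)" using A_le[OF Iall all] .
      hence "\<eta> * A t (t mod n) \<le> \<eta> * (M - \<theta> t (t mod n))" using eta by (intro mult_left_mono) auto
      hence "\<theta> t (t mod n) + \<eta> * A t (t mod n) \<le> (1 - \<eta>) * \<theta> t (t mod n) + \<eta> * M" by (rule ar4)
      thus ?thesis using True theta_next[OF Iall] by simp
    next
      case False
      have "\<eta> * \<theta> t j \<le> \<eta> * M" using all j eta by (intro mult_left_mono) auto
      hence "\<theta> t j \<le> (1 - \<eta>) * \<theta> t j + \<eta> * M" by (rule ar5)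
      thus ?thesis using theta_other[OF Iall j False] by simp
    qed
  qed
  have stB: "\<theta> (Suc t) (t mod n) \<le> M - \<eta> * d / real n"
    if all: "\<forall>k<n. \<theta> t k \<le> M" and d: "0 \<le> d"
      and cnt: "card (nbhd E (t mod n)) < 2 * card {k\<in>nbhd E (t mod n). \<theta> t k \<le> M - d}" for t M d
    using A_le2[OF Iall all d cnt] theta_next[OF Iall] by simp
  have stA': "\<forall>j<n. - \<theta> (Suc t) j \<le> (1 - \<eta>) * (- \<theta> t j) + \<eta> * M" if all: "\<forall>k<n. - \<theta> t k \<le> M" for t M
  proof (intro allI impI)
    fix j assume j: "j < n"
    have allL: "\<forall>k<n. - M \<le> \<theta> t k" using all by force
    show "- \<theta> (Suc t) j \<le> (1 - \<eta>) * (- \<theta> t j) + \<eta> * M"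
    proof (cases "j = t mod n")
      case True
      have "- M - \<theta> t (t mod n) \<le> A t (t mod n)" using A_ge[OF Iall allL] .
      hence "\<eta> * (- M - \<theta> t (t mod n)) \<le> \<eta> * A t (t mod n)" using eta by (intro mult_left_mono) auto
      hence "- (\<theta> t (t mod n) + \<eta> * A t (t mod n)) \<le> (1 - \<eta>) * (- \<theta> t (t mod n)) + \<eta> * M" by (rule ar6)
      thus ?thesis using True theta_next[OF Iall] by simp
    next
      case False
      have "\<eta> * (- \<theta> t j) \<le> \<eta> * M" using all j eta by (intro mult_left_mono) auto
      hence "- \<theta> t j \<le> (1 - \<eta>) * (- \<theta> t j) + \<eta> * M" by (rule ar5)
      thus ?thesis using theta_other[OF Iall j False] by simp
    qed
  qed
  have stB': "- \<theta> (Suc t) (t mod n) \<le> M - \<eta> * d / real n"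
    if all: "\<forall>k<n. - \<theta> t k \<le> M" and d: "0 \<le> d"
      and cnt: "card (nbhd E (t mod n)) < 2 * card {k\<in>nbhd E (t mod n). - \<theta> t k \<le> M - d}" for t M d
  proof -
    have allL: "\<forall>k<n. - M \<le> \<theta> t k" using all by force
    have "{k\<in>nbhd E (t mod n). - \<theta> t k \<le> M - d} = {k\<in>nbhd E (t mod n). - M + d \<le> \<theta> t k}" by auto
    hence cnt': "card (nbhd E (t mod n)) < 2 * card {k\<in>nbhd E (t mod n). - M + d \<le> \<theta> t k}" using cnt by simp
    have "- M + \<eta> * d / real n \<le> \<theta> t (t mod n) + \<eta> * A t (t mod n)" by (rule A_ge2[OF Iall allL d cnt'])
    thus ?thesis using theta_next[OF Iall] by simp
  qed
  have C1: "cons n \<eta> (nbhd E) \<theta>"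
    by (rule cons.intro[OF n1 eta(1) eta(2) Nsub' expd stA stB])
  have C2: "cons n \<eta> (nbhd E) (\<lambda>t j. - \<theta> t j)"
    by (rule cons.intro[OF n1 eta(1) eta(2) Nsub' expd stA' stB'])
  interpret CC: cons2 n \<eta> "nbhd E" \<theta> by (rule cons2.intro[OF C1 C2])
  have b0: "\<forall>k<n. - R \<le> \<theta> 0 k \<and> \<theta> 0 k \<le> R"
  proof (intro allI impI)
    fix k assume "k < n"
    hence "\<bar>\<theta> 0 k\<bar> \<le> R" by (rule Rprops(3))
    thus "- R \<le> \<theta> 0 k \<and> \<theta> 0 k \<le> R" by linarith
  qed
  have "\<forall>t. 0 \<le> delta E zs (z t) \<and> delta E zs (z t) \<le> CC.\<kappa> ^ (t div (n * n)) * (R - - R)"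
  proof
    fix t
    obtain L M where LM: "M - L \<le> CC.\<kappa> ^ (t div (n * n)) * (R - - R)" "\<forall>k<n. L \<le> \<theta> t k \<and> \<theta> t k \<le> M"
      using CC.geom[OF b0, of t] by blast
    show "0 \<le> delta E zs (z t) \<and> delta E zs (z t) \<le> CC.\<kappa> ^ (t div (n * n)) * (R - - R)"
      using delta_bound[OF LM(2)] LM(1) by linarith
  qed
  thus ?thesis using CC.kappa by blast
qed

end

theorem theorem3:
  fixes n :: nat and E Eg Eb :: "(nat \<times> nat) set"
    and zs :: "nat \<Rightarrow> complex" and zobs :: "nat \<Rightarrow> nat \<Rightarrow> complex"
    and z :: "nat \<Rightarrow> nat \<Rightarrow> complex" and \<eta> :: real
  assumes graph: "E \<subseteq> {..<n} \<times> {..<n}" "sym E" "\<forall>j. (j, j) \<notin> E"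
    and split: "E = Eg \<union> Eb" "Eg \<inter> Eb = {}" "sym Eg" "sym Eb"
    and zs_unit: "\<forall>j<n. cmod (zs j) = 1"
    and obs_unit: "\<forall>(j, k) \<in> E. cmod (zobs j k) = 1"
    and obs_good: "\<forall>(j, k) \<in> Eg. zobs j k = zs j * cnj (zs k)"
    and alpha0: "\<forall>j<n. real (card (nbhd Eb j)) / real (card (nbhd E j)) < 1 / 4"
    and init_unit: "\<forall>j<n. cmod (z 0 j) = 1"
    and init: "\<exists>c. cmod c = 1 \<and> (\<forall>j<n. d_ang c (cnj (zs j) * z 0 j) < pi / 2)"
    and expander: "\<forall>J. J \<subseteq> {..<n} \<and> J \<noteq> {} \<and> real (card J) \<le> real n / 2 \<longrightarrow>
                      (\<exists>j\<in>J. card (nbhd E j \<inter> ({..<n} - J)) > card (nbhd E j \<inter> J))"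
    and eta: "0 < \<eta>" "\<eta> < 1"
    and step_j: "\<forall>t. z (Suc t) (t mod n) = tas_update \<eta> E zobs (z t) (t mod n)"
    and step_other: "\<forall>t. \<forall>k<n. k \<noteq> t mod n \<longrightarrow> z (Suc t) k = z t k"
  shows "(\<lambda>t. delta E zs (z t)) \<longlonglongrightarrow> 0 \<and>
         (E = {(j, k). j < n \<and> k < n \<and> j \<noteq> k} \<longrightarrow>
            (\<exists>C r. 0 < r \<and> r < 1 \<and> (\<forall>t. delta E zs (z t) \<le> C * r ^ t)))"
proof -
  have geo: "\<exists>C r. 0 < r \<and> r < 1 \<and> (\<forall>t. 0 \<le> delta E zs (z t) \<and> delta E zs (z t) \<le> C * r ^ t)"
  proof (cases "n = 0")
    case True
    hence "E = {}" using graph(1) by auto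
    hence "delta E zs (z t) = 0" for t unfolding delta_def by simp
    thus ?thesis by (intro exI[of _ 0] exI[of _ "1/2"]) auto
  next
    case False
    hence n1: "1 \<le> n" by simp
    obtain c where c: "cmod c = 1" "\<forall>j<n. d_ang c (cnj (zs j) * z 0 j) < pi / 2" using init by blast
    interpret CO: conc n E Eg Eb zs zobs z \<eta> c
      using n1 graph(1) split(1,2) zs_unit obs_good alpha0 init_unit c eta step_j step_other
      by unfold_locales auto
    obtain \<kappa> where k: "0 < \<kappa>" "\<kappa> < 1"
      "\<forall>t. 0 \<le> delta E zs (z t) \<and> delta E zs (z t) \<le> \<kappa> ^ (t div (n * n)) * (CO.R - - CO.R)"
      using CO.main_bound[OF expander] by blast
    have N: "1 \<le> n * n" using n1 by simp
    define r where "r = \<kappa> powr (1 / real (n * n))"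
    define C where "C = (CO.R - - CO.R) * (1 / \<kappa>)"
    have r0: "0 < r" unfolding r_def using k by simp
    have "\<kappa> powr (1 / real (n * n)) < 1 powr (1 / real (n * n))"
      using k N by (intro powr_less_mono2) auto
    hence r1: "r < 1" unfolding r_def by simp
    have R0: "0 \<le> CO.R - - CO.R" using CO.Rprops(1) by simp
    have "\<forall>t. 0 \<le> delta E zs (z t) \<and> delta E zs (z t) \<le> C * r ^ t"
    proof
      fix t
      have "\<kappa> ^ (t div (n * n)) \<le> (1 / \<kappa>) * r ^ t" unfolding r_def by (rule geo_conv[OF k(1,2) N])
      hence "\<kappa> ^ (t div (n * n)) * (CO.R - - CO.R) \<le> (1 / \<kappa>) * r ^ t * (CO.R - - CO.R)"
        using R0 by (rule mult_right_mono)
      moreover have "(1 / \<kappa>) * r ^ t * (CO.R - - CO.R) = C * r ^ t" unfolding C_def by simp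
      moreover have "0 \<le> delta E zs (z t)" "delta E zs (z t) \<le> \<kappa> ^ (t div (n * n)) * (CO.R - - CO.R)"
        using k(3) by blast+
      ultimately show "0 \<le> delta E zs (z t) \<and> delta E zs (z t) \<le> C * r ^ t" by linarith
    qed
    thus ?thesis using r0 r1 by blast
  qed
  then obtain C r where Cr: "0 < r" "r < 1" "\<forall>t. 0 \<le> delta E zs (z t) \<and> delta E zs (z t) \<le> C * r ^ t"
    by blast
  have "(\<lambda>t. C * r ^ t) \<longlonglongrightarrow> 0"
    using Cr by (intro tendsto_mult_right_zero LIMSEQ_power_zero) simp
  moreover have ev1: "\<forall>\<^sub>F t in sequentially. (0::real) \<le> delta E zs (z t)"
    by (intro always_eventually) (use Cr(3) in blast)
  moreover have ev2: "\<forall>\<^sub>F t in sequentially. delta E zs (z t) \<le> C * r ^ t"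
    by (intro always_eventually) (use Cr(3) in blast)
  ultimately have "(\<lambda>t. delta E zs (z t)) \<longlonglongrightarrow> 0"
    by (intro tendsto_sandwich[OF ev1 ev2 tendsto_const]) simp
  thus ?thesis using Cr by blast
qed

end
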